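(* There is a universal constant $c>0$ such that for all integers $n,d$ with $2\le d\le n/2$, the optimal MLSI constant $\alpha=\sup_{f>0\ \text{non-constant}}\frac{{\rm Ent}_{\pi_u}(f)}{\mathcal E_{\pi_u}(f,\log f)}$ of $(\Omega^B_n(d),\pi_u,Q_u)$ satisfies $\alpha\ge c\,nd$.
   Context: $\Omega^B_n(d)$ is the set of all simple bipartite $d$-regular graphs on $[n^{(\ell)}]\sqcup[n^{(r)}]$ with uniform distribution $\pi_u$. A simple switching of $G$ picks two edges $(i_1,j_1),(i_2,j_2)$ with $i_1\ne i_2$, $j_1\ne j_2$, deletes them and adds $(i_1,j_2),(i_2,j_1)$, provided the result is simple; $\mathcal N(G)$ is the set of graphs so obtainable. $Q_u(G_1,G_2)=(nd(nd-1)/2)^{-1}$ if $G_2\in\mathcal N(G_1)$, $Q_u(G_1,G_1)=-|\mathcal N(G_1)|/(nd(nd-1)/2)$, else $0$. ${\rm Ent}_\pi(f)=\mathbb E_\pi[f(\log f-\log\mathbb E_\pi f)]$, $\mathcal E_\pi(f,\log f)=\frac12\sum_{G,G'}\pi(G)Q(G,G')(f(G)-f(G'))\log\frac{f(G)}{f(G')}$. *)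

theory Defs
  imports "HOL-Analysis.Analysis"
begin

text \<open>A bipartite graph on left vertices [n] and right vertices [n] is represented by its
edge set, a set of pairs (i,j) with i a left vertex and j a right vertex, i,j in {1..n}.
Representing edges as a set makes the graph simple (no multi-edges).\<close>

type_synonym bgraph = "(nat \<times> nat) set"

definition bip_regular :: "nat \<Rightarrow> nat \<Rightarrow> bgraph \<Rightarrow> bool" where
  "bip_regular n d G \<longleftrightarrow> G \<subseteq> {1..n} \<times> {1..n}
     \<and> (\<forall>i\<in>{1..n}. card {j. (i, j) \<in> G} = d)
     \<and> (\<forall>j\<in>{1..n}. card {i. (i, j) \<in> G} = d)"

definition OmegaB :: "nat \<Rightarrow> nat \<Rightarrow> bgraph set" where
  "OmegaB n d = {G. bip_regular n d G}"

definition switch_nbrs :: "bgraph \<Rightarrow> bgraph set" where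
  "switch_nbrs G = {(G - {(i1, j1), (i2, j2)}) \<union> {(i1, j2), (i2, j1)} | i1 j1 i2 j2.
      (i1, j1) \<in> G \<and> (i2, j2) \<in> G \<and> i1 \<noteq> i2 \<and> j1 \<noteq> j2
      \<and> (i1, j2) \<notin> G \<and> (i2, j1) \<notin> G}"

definition Q_u :: "nat \<Rightarrow> nat \<Rightarrow> bgraph \<Rightarrow> bgraph \<Rightarrow> real" where
  "Q_u n d G1 G2 =
     (let N = real (n * d) * (real (n * d) - 1) / 2 in
      if G2 = G1 then - real (card (switch_nbrs G1)) / N
      else if G2 \<in> switch_nbrs G1 then 1 / N else 0)"

definition pi_u :: "nat \<Rightarrow> nat \<Rightarrow> bgraph \<Rightarrow> real" where
  "pi_u n d G = (if G \<in> OmegaB n d then 1 / real (card (OmegaB n d)) else 0)"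

definition Ent_u :: "nat \<Rightarrow> nat \<Rightarrow> (bgraph \<Rightarrow> real) \<Rightarrow> real" where
  "Ent_u n d f =
     (let m = (\<Sum>G\<in>OmegaB n d. pi_u n d G * f G) in
      (\<Sum>G\<in>OmegaB n d. pi_u n d G * (f G * (ln (f G) - ln m))))"

definition Dir_u :: "nat \<Rightarrow> nat \<Rightarrow> (bgraph \<Rightarrow> real) \<Rightarrow> real" where
  "Dir_u n d f = 1 / 2 * (\<Sum>G\<in>OmegaB n d. \<Sum>G'\<in>OmegaB n d.
      pi_u n d G * Q_u n d G G' * (f G - f G') * ln (f G / f G'))"

definition mlsi_const :: "nat \<Rightarrow> nat \<Rightarrow> ereal" where
  "mlsi_const n d = (SUP f \<in> {f. (\<forall>G\<in>OmegaB n d. f G > 0)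
        \<and> (\<exists>G\<in>OmegaB n d. \<exists>G'\<in>OmegaB n d. f G \<noteq> f G')}.
      ereal (Ent_u n d f / Dir_u n d f))"

end

theory Submission
  imports Defs
begin


lemma ln_le_half: assumes "(1::real) \<le> y" shows "ln y \<le> (y - 1/y)/2"
proof -
  have "(\<lambda>y. (y - 1/y)/2 - ln y) 1 \<le> (\<lambda>y. (y - 1/y)/2 - ln y) y"
  proof (rule DERIV_nonneg_imp_nondecreasing[OF assms])
    fix x :: real assume x: "1 \<le> x" "x \<le> y"
    have "DERIV (\<lambda>y. (y - 1/y)/2 - ln y) x :> ((1 + 1/x^2)/2 - 1/x)"
      using x by (auto intro!: derivative_eq_intros simp: power2_eq_square field_simps)
    moreover have "(1 + 1/x^2)/2 - 1/x = (1 - 1/x)^2/2"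
      using x by (simp add: power2_eq_square field_simps)
    ultimately show "\<exists>d. DERIV (\<lambda>y. (y - 1/y)/2 - ln y) x :> d \<and> d \<ge> 0" by force
  qed
  thus ?thesis by simp
qed

lemma h_bound: assumes "0 \<le> (r::real)" "r \<le> 1/2"
  shows "r / 12 \<le> 2 * r * ln 2 - (1 + r) * ln (1 + r)"
proof -
  have "ln (1+r) \<le> ((1+r) - 1/(1+r))/2" using ln_le_half assms by simp
  hence "(1+r) * ln (1+r) \<le> (1+r) * (((1+r) - 1/(1+r))/2)" using assms by (intro mult_left_mono) auto
  also have "\<dots> = r + r^2/2" using assms by (simp add: field_simps power2_eq_square)
  finally have a: "(1+r) * ln (1+r) \<le> r + r^2/2" .
  have "2/3 \<le> ln (2::real)" by (rule ln2_ge_two_thirds)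
  have "r^2 \<le> r/2" using assms mult_left_mono[of "2*r" 1 r] by (simp add: power2_eq_square)
  have "r * (2/3) \<le> r * ln 2" using \<open>2/3 \<le> ln 2\<close> assms by (intro mult_left_mono) auto
  show ?thesis using a \<open>r * (2/3) \<le> r * ln 2\<close> \<open>r^2 \<le> r/2\<close> by linarith
qed


lemma switch_sym:
  assumes "G' \<in> switch_nbrs G" shows "G \<in> switch_nbrs G'"
proof -
  from assms obtain i1 j1 i2 j2 where h: "G' = (G - {(i1, j1), (i2, j2)}) \<union> {(i1, j2), (i2, j1)}"
    "(i1, j1) \<in> G" "(i2, j2) \<in> G" "i1 \<noteq> i2" "j1 \<noteq> j2" "(i1, j2) \<notin> G" "(i2, j1) \<notin> G"
    unfolding switch_nbrs_def by blast
  have "G = (G' - {(i1, j2), (i2, j1)}) \<union> {(i1, j1), (i2, j2)}" using h by auto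
  moreover have "(i1, j2) \<in> G'" "(i2, j1) \<in> G'" "(i1, j1) \<notin> G'" "(i2, j2) \<notin> G'" using h by auto
  ultimately show ?thesis unfolding switch_nbrs_def using h(4,5) by blast
qed

lemma card_ins_rem: "finite S \<Longrightarrow> a \<in> S \<Longrightarrow> b \<notin> S \<Longrightarrow> card (insert b (S - {a})) = card S"
  by (simp add: card_Diff_singleton) (metis card_Diff1_less card_gt_0_iff Suc_pred empty_iff)

lemma switch_regular:
  assumes G: "G \<in> OmegaB n d" and G': "G' \<in> switch_nbrs G" shows "G' \<in> OmegaB n d"
proof -
  from G' obtain i1 j1 i2 j2 where h: "G' = (G - {(i1, j1), (i2, j2)}) \<union> {(i1, j2), (i2, j1)}"
    "(i1, j1) \<in> G" "(i2, j2) \<in> G" "i1 \<noteq> i2" "j1 \<noteq> j2" "(i1, j2) \<notin> G" "(i2, j1) \<notin> G"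
    unfolding switch_nbrs_def by blast
  have sub: "G \<subseteq> {1..n} \<times> {1..n}" and rows: "\<forall>i\<in>{1..n}. card {j. (i, j) \<in> G} = d"
    and cols: "\<forall>j\<in>{1..n}. card {i. (i, j) \<in> G} = d"
    using G unfolding OmegaB_def bip_regular_def by auto
  have finr: "finite {j. (i, j) \<in> G}" for i
    by (rule finite_subset[of _ "{1..n}"]) (use sub in auto)
  have finc: "finite {i. (i, j) \<in> G}" for j
    by (rule finite_subset[of _ "{1..n}"]) (use sub in auto)
  have sub': "G' \<subseteq> {1..n} \<times> {1..n}" using h sub by auto
  have r: "card {j. (i, j) \<in> G'} = card {j. (i, j) \<in> G}" for i
  proof -
    consider "i = i1" | "i = i2" | "i \<noteq> i1" "i \<noteq> i2" by blast
    then show ?thesis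
    proof cases
      case 1
      have "{j. (i, j) \<in> G'} = insert j2 ({j. (i, j) \<in> G} - {j1})" using h 1 by auto
      then show ?thesis using card_ins_rem[OF finr, of j1 i j2] h 1 by auto
    next
      case 2
      have "{j. (i, j) \<in> G'} = insert j1 ({j. (i, j) \<in> G} - {j2})" using h 2 by auto
      then show ?thesis using card_ins_rem[OF finr, of j2 i j1] h 2 by auto
    next
      case 3
      have "{j. (i, j) \<in> G'} = {j. (i, j) \<in> G}" using h 3 by auto
      then show ?thesis by simp
    qed
  qed
  have c: "card {i. (i, j) \<in> G'} = card {i. (i, j) \<in> G}" for j
  proof -
    consider "j = j1" | "j = j2" | "j \<noteq> j1" "j \<noteq> j2" by blast
    then show ?thesis
    proof cases
      case 1
      have "{i. (i, j) \<in> G'} = insert i2 ({i. (i, j) \<in> G} - {i1})" using h 1 by auto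
      then show ?thesis using card_ins_rem[OF finc, of i1 j i2] h 1 by auto
    next
      case 2
      have "{i. (i, j) \<in> G'} = insert i1 ({i. (i, j) \<in> G} - {i2})" using h 2 by auto
      then show ?thesis using card_ins_rem[OF finc, of i2 j i1] h 2 by auto
    next
      case 3
      have "{i. (i, j) \<in> G'} = {i. (i, j) \<in> G}" using h 3 by auto
      then show ?thesis by simp
    qed
  qed
  show ?thesis unfolding OmegaB_def bip_regular_def using sub' rows cols r c by auto
qed


lemma switch_nbrsE:
  assumes "G' \<in> switch_nbrs G"
  obtains i1 j1 i2 j2 where "G' = (G - {(i1, j1), (i2, j2)}) \<union> {(i1, j2), (i2, j1)}"
    "(i1, j1) \<in> G" "(i2, j2) \<in> G" "i1 \<noteq> i2" "j1 \<noteq> j2" "(i1, j2) \<notin> G" "(i2, j1) \<notin> G"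
  using assms unfolding switch_nbrs_def by blast

lemma card_G_le:
  assumes G: "G \<in> OmegaB n d" shows "card G \<le> n * d"
proof -
  have sub: "G \<subseteq> {1..n} \<times> {1..n}" and rows: "\<forall>i\<in>{1..n}. card {j. (i, j) \<in> G} = d"
    using G unfolding OmegaB_def bip_regular_def by auto
  define U where "U = (\<Union>i\<in>{1..n}. {i} \<times> {j. (i, j) \<in> G})"
  have "G = U" unfolding U_def using sub by auto
  then have e: "card G = card U" by (rule arg_cong)
  have "card U \<le> (\<Sum>i\<in>{1..n}. card ({i} \<times> {j. (i, j) \<in> G}))"
    unfolding U_def by (rule card_UN_le) simp
  hence "card G \<le> (\<Sum>i\<in>{1..n}. card ({i} \<times> {j. (i, j) \<in> G}))" using e by simp
  also have "\<dots> = (\<Sum>i\<in>{1..n}. d)" using rows by (intro sum.cong) (auto simp: card_cartesian_product_singleton)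
  finally show ?thesis by simp
qed

lemma nbr_bound:
  assumes G: "G \<in> OmegaB n d" and dn: "d \<le> n"
  shows "card {G'\<in>switch_nbrs G. ((1::nat,1::nat)\<in>G) \<noteq> ((1,1)\<in>G')} \<le> n * d"
proof -
  have sub: "G \<subseteq> {1..n} \<times> {1..n}" and rows: "\<forall>i\<in>{1..n}. card {j. (i, j) \<in> G} = d"
    and cols: "\<forall>j\<in>{1..n}. card {i. (i, j) \<in> G} = d"
    using G unfolding OmegaB_def bip_regular_def by auto
  have finG: "finite G" using sub by (rule finite_subset) auto
  show ?thesis
  proof (cases "(1,1) \<in> G")
    case True
    define \<phi> where "\<phi> = (\<lambda>(i2::nat, j2::nat). (G - {(1, 1), (i2, j2)}) \<union> {(1, j2), (i2, 1)})"
    have "{G'\<in>switch_nbrs G. ((1::nat,1::nat)\<in>G) \<noteq> ((1,1)\<in>G')} \<subseteq> \<phi> ` G"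
    proof
      fix G' assume "G' \<in> {G'\<in>switch_nbrs G. ((1::nat,1::nat)\<in>G) \<noteq> ((1,1)\<in>G')}"
      then obtain i1 j1 i2 j2 where h: "G' = (G - {(i1, j1), (i2, j2)}) \<union> {(i1, j2), (i2, j1)}"
        "(i1, j1) \<in> G" "(i2, j2) \<in> G" "i1 \<noteq> i2" "j1 \<noteq> j2" "(i1, j2) \<notin> G" "(i2, j1) \<notin> G"
        and n11: "(1,1) \<notin> G'"
      proof -
        assume a: "\<And>i1 j1 i2 j2. G' = (G - {(i1, j1), (i2, j2)}) \<union> {(i1, j2), (i2, j1)} \<Longrightarrow>
          (i1, j1) \<in> G \<Longrightarrow> (i2, j2) \<in> G \<Longrightarrow> i1 \<noteq> i2 \<Longrightarrow> j1 \<noteq> j2 \<Longrightarrow> (i1, j2) \<notin> G \<Longrightarrow> (i2, j1) \<notin> G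
          \<Longrightarrow> (1,1) \<notin> G' \<Longrightarrow> thesis"
        from \<open>G' \<in> _\<close> have m: "G' \<in> switch_nbrs G" and n: "(1,1) \<notin> G'" using True by auto
        from m show thesis by (rule switch_nbrsE) (rule a, assumption+, rule n)
      qed
      have "(1,1) = (i1,j1) \<or> (1,1) = (i2,j2)"
      proof (rule ccontr)
        assume "\<not> ((1,1) = (i1,j1) \<or> (1,1) = (i2,j2))"
        then have "(1,1) \<in> G'" using True h(1) by simp
        then show False using n11 by simp
      qed
      then show "G' \<in> \<phi> ` G"
      proof
        assume e: "(1,1) = (i1,j1)"
        have e1: "i1 = 1" and e2: "j1 = 1" using e by auto
        have "G' = \<phi> (i2, j2)" unfolding \<phi>_def using h(1) unfolding e1 e2 by (simp add: insert_commute)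
        thus ?thesis using h(3) by blast
      next
        assume e: "(1,1) = (i2,j2)"
        have e1: "i2 = 1" and e2: "j2 = 1" using e by auto
        have "G' = \<phi> (i1, j1)" unfolding \<phi>_def using h(1) unfolding e1 e2 by (simp add: insert_commute)
        thus ?thesis using h(2) by blast
      qed
    qed
    hence "card {G'\<in>switch_nbrs G. ((1::nat,1::nat)\<in>G) \<noteq> ((1,1)\<in>G')} \<le> card (\<phi> ` G)"
      by (rule card_mono[rotated]) (rule finite_imageI[OF finG])
    also have "\<dots> \<le> card G" using finG by (rule card_image_le)
    also have "\<dots> \<le> n * d" using card_G_le[OF G] .
    finally show ?thesis .
  next
    case False
    define R where "R = {j. (1, j) \<in> G}"
    define C where "C = {i. (i, 1) \<in> G}"
    define \<psi> where "\<psi> = (\<lambda>(j1::nat, i2::nat). (G - {(1, j1), (i2, 1)}) \<union> {(1, 1), (i2, j1)})"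
    have "{G'\<in>switch_nbrs G. ((1::nat,1::nat)\<in>G) \<noteq> ((1,1)\<in>G')} \<subseteq> \<psi> ` (R \<times> C)"
    proof
      fix G' assume "G' \<in> {G'\<in>switch_nbrs G. ((1::nat,1::nat)\<in>G) \<noteq> ((1,1)\<in>G')}"
      then obtain i1 j1 i2 j2 where h: "G' = (G - {(i1, j1), (i2, j2)}) \<union> {(i1, j2), (i2, j1)}"
        "(i1, j1) \<in> G" "(i2, j2) \<in> G" "i1 \<noteq> i2" "j1 \<noteq> j2" "(i1, j2) \<notin> G" "(i2, j1) \<notin> G"
        and n11: "(1,1) \<in> G'"
      proof -
        assume a: "\<And>i1 j1 i2 j2. G' = (G - {(i1, j1), (i2, j2)}) \<union> {(i1, j2), (i2, j1)} \<Longrightarrow>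
          (i1, j1) \<in> G \<Longrightarrow> (i2, j2) \<in> G \<Longrightarrow> i1 \<noteq> i2 \<Longrightarrow> j1 \<noteq> j2 \<Longrightarrow> (i1, j2) \<notin> G \<Longrightarrow> (i2, j1) \<notin> G
          \<Longrightarrow> (1,1) \<in> G' \<Longrightarrow> thesis"
        from \<open>G' \<in> _\<close> have m: "G' \<in> switch_nbrs G" and n: "(1,1) \<in> G'" using False by auto
        from m show thesis by (rule switch_nbrsE) (rule a, assumption+, rule n)
      qed
      have "(1,1) = (i1,j2) \<or> (1,1) = (i2,j1)"
      proof (rule ccontr)
        assume "\<not> ((1,1) = (i1,j2) \<or> (1,1) = (i2,j1))"
        then have "(1,1) \<notin> G'" using False h(1) by simp
        then show False using n11 by simp
      qed
      then show "G' \<in> \<psi> ` (R \<times> C)"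
      proof
        assume e: "(1,1) = (i1,j2)"
        have e1: "i1 = 1" and e2: "j2 = 1" using e by auto
        have "G' = \<psi> (j1, i2)" unfolding \<psi>_def using h(1) unfolding e1 e2 by (simp add: insert_commute)
        moreover have "(j1, i2) \<in> R \<times> C" using h(2,3) e unfolding R_def C_def by auto
        ultimately show ?thesis by blast
      next
        assume e: "(1,1) = (i2,j1)"
        have e1: "i2 = 1" and e2: "j1 = 1" using e by auto
        have "G' = \<psi> (j2, i1)" unfolding \<psi>_def using h(1) unfolding e1 e2 by (simp add: insert_commute)
        moreover have "(j2, i1) \<in> R \<times> C" using h(2,3) e unfolding R_def C_def by auto
        ultimately show ?thesis by blast
      qed
    qed
    moreover have finR: "finite R" unfolding R_def
      by (rule finite_subset[of _ "{1..n}"]) (use sub in auto)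
    moreover have finC: "finite C" unfolding C_def
      by (rule finite_subset[of _ "{1..n}"]) (use sub in auto)
    ultimately have "card {G'\<in>switch_nbrs G. ((1::nat,1::nat)\<in>G) \<noteq> ((1,1)\<in>G')} \<le> card (\<psi> ` (R \<times> C))"
      by (intro card_mono finite_imageI finite_cartesian_product) 
    also have "\<dots> \<le> card (R \<times> C)" using finR finC by (intro card_image_le) auto
    also have "\<dots> \<le> n * d"
    proof (cases "n = 0")
      case True
      then have "R = {}" unfolding R_def using sub by auto
      then show ?thesis by simp
    next
      case False
      then have "card R = d" "card C = d" using rows cols unfolding R_def C_def by auto
      then show ?thesis using dn by (simp add: card_cartesian_product)
    qed
    finally show ?thesis .
  qed
qed



lemma mod_shift_inj:
  fixes a n :: nat
  shows "inj_on (\<lambda>x. (x + a) mod n) {1..n}"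
proof (rule inj_onI)
  have key: "x1 = x2" if "x1 \<in> {1..n}" "x2 \<in> {1..n}" "(x1 + a) mod n = (x2 + a) mod n" "x1 \<le> x2" for x1 x2
  proof -
    have m: "(x2 + a) mod n = (x1 + a) mod n" "x1 + a \<le> x2 + a" using that by auto
    obtain s where s: "x2 + a = x1 + a + n * s" using mod_eq_nat1E[OF m] by blast
    have "x1 + n * s \<le> n" "1 \<le> x1" using s that(1,2) by auto
    then have "n * s < n" by linarith
    then have "s = 0" by (cases s) auto
    then show ?thesis using s by simp
  qed
  fix x1 x2 assume "x1 \<in> {1..n}" "x2 \<in> {1..n}" "(x1 + a) mod n = (x2 + a) mod n"
  then show "x1 = x2" using key[of x1 x2] key[of x2 x1] by (cases "x1 \<le> x2") auto
qed

lemma card_shift_set: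
  fixes a n d :: nat
  assumes "d \<le> n"
  shows "card {x\<in>{1..n}. (x + a) mod n < d} = d"
proof (cases "n = 0")
  case True then show ?thesis using assms by simp
next
  case False
  let ?f = "\<lambda>x. (x + a) mod n"
  have inj: "inj_on ?f {1..n}" by (rule mod_shift_inj)
  have img: "?f ` {1..n} = {0..<n}"
  proof (rule card_subset_eq)
    show "?f ` {1..n} \<subseteq> {0..<n}" using False by auto
    show "card (?f ` {1..n}) = card {0..<n}" using card_image[OF inj] by simp
  qed simp
  have "?f ` {x\<in>{1..n}. ?f x < d} = {0..<d}"
  proof
    show "?f ` {x\<in>{1..n}. ?f x < d} \<subseteq> {0..<d}" by auto
    show "{0..<d} \<subseteq> ?f ` {x\<in>{1..n}. ?f x < d}"
    proof
      fix k assume k: "k \<in> {0..<d}"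
      then have "k \<in> ?f ` {1..n}" using img assms by auto
      then obtain x where "x \<in> {1..n}" "k = ?f x" by blast
      then show "k \<in> ?f ` {x\<in>{1..n}. ?f x < d}" using k by auto
    qed
  qed
  moreover have "inj_on ?f {x\<in>{1..n}. ?f x < d}" using inj by (rule inj_on_subset) auto
  ultimately show ?thesis using card_image[of ?f "{x\<in>{1..n}. ?f x < d}"] by simp
qed

definition circ :: "nat \<Rightarrow> nat \<Rightarrow> bgraph" where
  "circ n d = {(i, j). i \<in> {1..n} \<and> j \<in> {1..n} \<and> (j + n - i) mod n < d}"

lemma circ_in: assumes "d \<le> n" shows "circ n d \<in> OmegaB n d"
proof -
  have row: "card {j. (i, j) \<in> circ n d} = d" if i: "i \<in> {1..n}" for i
  proof -
    have "{j. (i, j) \<in> circ n d} = {x\<in>{1..n}. (x + (n - i)) mod n < d}"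
      using i unfolding circ_def by auto
    then show ?thesis using card_shift_set[OF assms] by simp
  qed
  have col: "card {i. (i, j) \<in> circ n d} = d" if j: "j \<in> {1..n}" for j
  proof -
    have "{i. (i, j) \<in> circ n d} = (\<lambda>x. n + 1 - x) ` {x\<in>{1..n}. (x + (j - 1)) mod n < d}"
    proof
      show "{i. (i, j) \<in> circ n d} \<subseteq> (\<lambda>x. n + 1 - x) ` {x\<in>{1..n}. (x + (j - 1)) mod n < d}"
      proof
        fix i assume "i \<in> {i. (i, j) \<in> circ n d}"
        then have i: "i \<in> {1..n}" "(j + n - i) mod n < d" unfolding circ_def by auto
        have "j + n - i = (n + 1 - i) + (j - 1)" using i j by auto
        then have "n + 1 - i \<in> {x\<in>{1..n}. (x + (j - 1)) mod n < d}" using i by auto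
        moreover have "i = n + 1 - (n + 1 - i)" using i by auto
        ultimately show "i \<in> (\<lambda>x. n + 1 - x) ` {x\<in>{1..n}. (x + (j - 1)) mod n < d}" by blast
      qed
      show "(\<lambda>x. n + 1 - x) ` {x\<in>{1..n}. (x + (j - 1)) mod n < d} \<subseteq> {i. (i, j) \<in> circ n d}"
      proof
        fix i assume "i \<in> (\<lambda>x. n + 1 - x) ` {x\<in>{1..n}. (x + (j - 1)) mod n < d}"
        then obtain x where x: "x \<in> {1..n}" "(x + (j - 1)) mod n < d" "i = n + 1 - x" by blast
        have "j + n - i = x + (j - 1)" using x j by auto
        then show "i \<in> {i. (i, j) \<in> circ n d}" using x j unfolding circ_def by auto
      qed
    qed
    moreover have "inj_on (\<lambda>x. n + 1 - x) {x\<in>{1..n}. (x + (j - 1)) mod n < d}"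
      by (rule inj_onI) auto
    ultimately show ?thesis using card_image[of "\<lambda>x. n + 1 - x" "{x\<in>{1..n}. (x + (j - 1)) mod n < d}"] card_shift_set[OF assms, of "j - 1"] by simp
  qed
  show ?thesis unfolding OmegaB_def bip_regular_def using row col by (auto simp: circ_def)
qed

lemma circ_switch:
  assumes "2 \<le> d" "2 * d \<le> n"
  shows "\<exists>G\<in>OmegaB n d. \<exists>G'\<in>switch_nbrs G. (1,1) \<in> G \<and> (1,1) \<notin> G'"
proof -
  let ?C = "circ n d"
  let ?i2 = "n - d + 1"
  have n: "4 \<le> n" using assms by linarith
  have a: "(1,1) \<in> ?C" using assms n unfolding circ_def by auto
  have b: "(?i2, n) \<in> ?C"
  proof -
    have "n + n - ?i2 = n + (d - 1)" using assms by auto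
    moreover have "(n + (d - 1)) mod n = (d - 1) mod n" by simp
    moreover have "(d - 1) mod n = d - 1" using assms by (intro mod_less) linarith
    ultimately have "(n + n - ?i2) mod n = d - 1" by simp
    then show ?thesis using assms unfolding circ_def by auto
  qed
  have c: "(1, n) \<notin> ?C"
  proof -
    have "(n + n - 1) mod n = n - 1"
    proof -
      have "n + n - 1 = (n - 1) + n" using n by auto
      moreover have "((n - 1) + n) mod n = (n - 1) mod n" by simp
      moreover have "(n - 1) mod n = n - 1" using n by (intro mod_less) linarith
      ultimately show ?thesis by simp
    qed
    then show ?thesis using assms unfolding circ_def by auto
  qed
  have e: "(?i2, 1) \<notin> ?C"
  proof -
    have "1 + n - ?i2 = d" using assms by auto
    then show ?thesis using assms unfolding circ_def by auto
  qed
  define G' where "G' = (?C - {(1, 1), (?i2, n)}) \<union> {(1, n), (?i2, 1)}"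
  have "G' \<in> switch_nbrs ?C"
    unfolding switch_nbrs_def G'_def
    using a b c e assms n by (intro CollectI exI[of _ 1] exI[of _ "1::nat"] exI[of _ ?i2] exI[of _ n]) auto
  moreover have "(1,1) \<notin> G'" unfolding G'_def using assms n by auto
  ultimately show ?thesis using circ_in[of d n] a assms by auto
qed



lemma sum_if_B:
  assumes "finite \<Omega>" "B \<subseteq> \<Omega>"
  shows "(\<Sum>G\<in>\<Omega>. if G \<in> B then a else b) = real (card B) * a + (real (card \<Omega>) - real (card B)) * (b::real)"
proof -
  have "(\<Sum>G\<in>\<Omega>. if G \<in> B then a else b) = sum (\<lambda>_. a) (\<Omega> \<inter> {x. x \<in> B}) + sum (\<lambda>_. b) (\<Omega> \<inter> - {x. x \<in> B})"
    using assms(1) by (rule sum.If_cases)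
  also have "\<Omega> \<inter> {x. x \<in> B} = B" using assms by auto
  also have "\<Omega> \<inter> - {x. x \<in> B} = \<Omega> - B" by auto
  finally have e: "(\<Sum>G\<in>\<Omega>. if G \<in> B then a else b) = real (card B) * a + real (card (\<Omega> - B)) * b" by simp
  have "card (\<Omega> - B) = card \<Omega> - card B" using assms by (simp add: card_Diff_subset finite_subset)
  moreover have "card B \<le> card \<Omega>" using assms card_mono by blast
  ultimately have "real (card (\<Omega> - B)) = real (card \<Omega>) - real (card B)" by simp
  then show ?thesis using e by simp
qed

lemma OmegaB_finite: "finite (OmegaB n d)"
proof -
  have "OmegaB n d \<subseteq> Pow ({1..n} \<times> {1..n})" unfolding OmegaB_def bip_regular_def by auto
  then show ?thesis by (rule finite_subset) auto
qed

theorem mainTheorem5: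
  shows "\<exists>c::real. c > 0 \<and> (\<forall>n d::nat. 2 \<le> d \<and> real d \<le> real n / 2 \<longrightarrow>
           mlsi_const n d \<ge> ereal (c * real n * real d))"
proof (intro exI[of _ "1/40"] conjI allI impI)
  fix n d :: nat assume nd: "2 \<le> d \<and> real d \<le> real n / 2"
  then have d2: "2 \<le> d" and dn2: "2 * d \<le> n" by linarith+
  define \<Omega> where "\<Omega> = OmegaB n d"
  have finO: "finite \<Omega>" unfolding \<Omega>_def by (rule OmegaB_finite)
  obtain G0 G1 where G0: "G0 \<in> \<Omega>" and G1s: "G1 \<in> switch_nbrs G0" and G0in: "(1,1) \<in> G0"
    and G1out: "(1,1) \<notin> G1"
    using circ_switch[OF d2 dn2] unfolding \<Omega>_def by blast
  have G1: "G1 \<in> \<Omega>" using switch_regular G0 G1s unfolding \<Omega>_def by blast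
  define A where "A = {G\<in>\<Omega>. (1::nat,1::nat) \<in> G}"
  define bb where "bb = (2 * card A \<le> card \<Omega>)"
  define B where "B = {G\<in>\<Omega>. ((1::nat,1::nat) \<in> G) = bb}"
  have BO: "B \<subseteq> \<Omega>" unfolding B_def by auto
  have finB: "finite B" using finO BO finite_subset by blast
  have AO: "A \<subseteq> \<Omega>" unfolding A_def by auto
  have c1: "card (\<Omega> - A) = card \<Omega> - card A" by (rule card_Diff_subset[OF finite_subset[OF AO finO] AO])
  have c2: "card A \<le> card \<Omega>" by (rule card_mono[OF finO AO])
  have cardAB: "card A + card (\<Omega> - A) = card \<Omega>" using c1 c2 by simp
  have "B = A \<or> B = \<Omega> - A" unfolding B_def A_def by (cases bb) auto
  have cardB: "2 * card B \<le> card \<Omega>"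
  proof (cases bb)
    case True then have "B = A" unfolding B_def A_def by auto
    then show ?thesis using True bb_def by simp
  next
    case False then have "B = \<Omega> - A" unfolding B_def A_def by auto
    then show ?thesis using False bb_def cardAB by simp
  qed
  obtain Gb Gn where Gb: "Gb \<in> B" and Gn: "Gn \<in> \<Omega> - B"
    using G0 G1 G0in G1out unfolding B_def by (cases bb) auto
  have Bpos: "0 < card B" using Gb finB card_gt_0_iff by blast
  define K where "K = real (card \<Omega>)"
  define k where "k = real (card B)"
  define r where "r = k / K"
  have Kpos: "K > 0" unfolding K_def using G0 finO card_gt_0_iff by fastforce
  have kpos: "k > 0" unfolding k_def using Bpos by simp
  have r0: "0 < r" unfolding r_def using Kpos kpos by simp
  have r2: "r \<le> 1/2" unfolding r_def k_def K_def using cardB Kpos K_def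
    by (simp add: field_simps)
  define f where "f = (\<lambda>G. if G \<in> B then 2 else (1::real))"
  have pi: "pi_u n d G = 1 / K" if "G \<in> \<Omega>" for G
    using that unfolding pi_u_def K_def \<Omega>_def by simp
  have m: "(\<Sum>G\<in>OmegaB n d. pi_u n d G * f G) = 1 + r"
  proof -
    have "(\<Sum>G\<in>OmegaB n d. pi_u n d G * f G) = (\<Sum>G\<in>\<Omega>. if G \<in> B then 2 / K else 1 / K)"
      unfolding \<Omega>_def[symmetric] by (intro sum.cong) (auto simp: pi f_def)
    also have "\<dots> = k * (2/K) + (K - k) * (1/K)" unfolding k_def K_def by (rule sum_if_B[OF finO BO])
    also have "\<dots> = 1 + r" unfolding r_def using Kpos by (simp add: field_simps)
    finally show ?thesis .
  qed
  have Ent: "Ent_u n d f = 2 * r * ln 2 - (1 + r) * ln (1 + r)"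
  proof -
    have "Ent_u n d f = (\<Sum>G\<in>\<Omega>. pi_u n d G * (f G * (ln (f G) - ln (1 + r))))"
      unfolding Ent_u_def Let_def m \<Omega>_def ..
    also have "\<dots> = (\<Sum>G\<in>\<Omega>. if G \<in> B then (2 * (ln 2 - ln (1 + r))) / K else (- ln (1 + r)) / K)"
      by (intro sum.cong) (auto simp: pi f_def)
    also have "\<dots> = k * ((2 * (ln 2 - ln (1 + r))) / K) + (K - k) * ((- ln (1 + r)) / K)"
      unfolding k_def K_def by (rule sum_if_B[OF finO BO])
    also have "\<dots> = 2 * r * ln 2 - (1 + r) * ln (1 + r)" unfolding r_def using Kpos
      by (simp add: field_simps)
    finally show ?thesis .
  qed
  have Entge: "r / 12 \<le> Ent_u n d f" unfolding Ent using h_bound r0 r2 by simp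
  define x where "x = real (n * d)"
  have x8: "x \<ge> 8"
  proof -
    have "4 \<le> n" using d2 dn2 by linarith
    then have "8 \<le> n * d" using d2 mult_le_mono[of 4 n 2 d] by simp
    then have "real 8 \<le> real (n * d)" by (rule of_nat_mono)
    then show ?thesis unfolding x_def by simp
  qed
  define N where "N = x * (x - 1) / 2"
  have Npos: "N > 0" unfolding N_def using x8 by simp
  define ind where "ind = (\<lambda>G G'. if G' \<in> switch_nbrs G \<and> (((1::nat,1::nat) \<in> G) \<noteq> ((1,1) \<in> G')) then 1 else (0::real))"
  define L where "L = ln 2 / (K * N)"
  have tm: "pi_u n d G * Q_u n d G G' * (f G - f G') * ln (f G / f G') = L * ind G G'"
    if "G \<in> \<Omega>" "G' \<in> \<Omega>" for G G'
  proof (cases "((1::nat,1::nat) \<in> G) = ((1,1) \<in> G')")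
    case True
    then have "f G = f G'" unfolding f_def B_def using that by auto
    then show ?thesis unfolding ind_def using True by simp
  next
    case False
    then have ne: "G \<noteq> G'" by auto
    have fv: "(f G - f G') * ln (f G / f G') = ln 2"
    proof (cases "G \<in> B")
      case True
      then have "G' \<notin> B" using False unfolding B_def by auto
      then show ?thesis using True unfolding f_def by simp
    next
      case nb: False
      then have "G' \<in> B" using False that unfolding B_def by auto
      then show ?thesis using nb unfolding f_def by (simp add: ln_div)
    qed
    have Q: "Q_u n d G G' = (if G' \<in> switch_nbrs G then 1 / N else 0)"
      unfolding Q_u_def Let_def N_def x_def using ne by auto
    show ?thesis
    proof (cases "G' \<in> switch_nbrs G")
      case True
      have "pi_u n d G * Q_u n d G G' * (f G - f G') * ln (f G / f G')
          = pi_u n d G * Q_u n d G G' * ((f G - f G') * ln (f G / f G'))" by simp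
      also have "\<dots> = L" unfolding fv Q pi[OF that(1)] L_def using True by simp
      finally show ?thesis unfolding ind_def using True False by simp
    next
      case nsw: False
      then show ?thesis unfolding Q ind_def by simp
    qed
  qed
  define S where "S = (\<Sum>G\<in>\<Omega>. \<Sum>G'\<in>\<Omega>. ind G G')"
  have Dir: "Dir_u n d f = L / 2 * S"
  proof -
    have "Dir_u n d f = 1/2 * (\<Sum>G\<in>\<Omega>. \<Sum>G'\<in>\<Omega>. L * ind G G')"
      unfolding Dir_u_def \<Omega>_def[symmetric] by (intro arg_cong[where f="\<lambda>t. 1/2 * t"] sum.cong refl) (simp add: tm)
    also have "\<dots> = L / 2 * S" unfolding S_def by (simp add: sum_distrib_left)
    finally show ?thesis .
  qed
  have ind_nn: "ind G G' \<ge> 0" for G G' unfolding ind_def by simp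
  have ind_sym: "ind G G' = ind G' G" for G G'
    unfolding ind_def using switch_sym[of G' G] switch_sym[of G G'] by auto
  define \<beta> where "\<beta> = (\<lambda>G. if G \<in> B then 1 else (0::real))"
  have ind_split: "ind G G' = ind G G' * \<beta> G + ind G G' * \<beta> G'" if "G \<in> \<Omega>" "G' \<in> \<Omega>" for G G'
    unfolding ind_def \<beta>_def B_def using that by auto
  define X where "X = (\<lambda>G. \<Sum>G'\<in>\<Omega>. ind G G')"
  have S2: "S = 2 * (\<Sum>G\<in>\<Omega>. \<beta> G * X G)"
  proof -
    have "S = (\<Sum>G\<in>\<Omega>. \<Sum>G'\<in>\<Omega>. ind G G' * \<beta> G) + (\<Sum>G\<in>\<Omega>. \<Sum>G'\<in>\<Omega>. ind G G' * \<beta> G')"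
      unfolding S_def by (subst sum.distrib[symmetric], intro sum.cong refl, subst sum.distrib[symmetric],
        intro sum.cong refl, rule ind_split) auto
    also have "(\<Sum>G\<in>\<Omega>. \<Sum>G'\<in>\<Omega>. ind G G' * \<beta> G') = (\<Sum>G'\<in>\<Omega>. \<Sum>G\<in>\<Omega>. ind G G' * \<beta> G')"
      by (rule sum.swap)
    also have "\<dots> = (\<Sum>G\<in>\<Omega>. \<Sum>G'\<in>\<Omega>. ind G G' * \<beta> G)"
      by (intro sum.cong refl) (simp add: ind_sym)
    also have "(\<Sum>G\<in>\<Omega>. \<Sum>G'\<in>\<Omega>. ind G G' * \<beta> G) = (\<Sum>G\<in>\<Omega>. \<beta> G * X G)"
      unfolding X_def by (simp add: sum_distrib_left mult.commute)
    finally show ?thesis by simp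
  qed
  have Xle: "X G \<le> x" if "G \<in> \<Omega>" for G
  proof -
    have "X G = (\<Sum>G'\<in>\<Omega>. if G' \<in> switch_nbrs G \<and> (((1::nat,1::nat) \<in> G) \<noteq> ((1,1) \<in> G')) then 1 else 0)"
      unfolding X_def ind_def ..
    also have "\<dots> = real (card {G'\<in>\<Omega>. G' \<in> switch_nbrs G \<and> (((1::nat,1::nat) \<in> G) \<noteq> ((1,1) \<in> G'))})"
      using finO by (simp add: sum.inter_filter[symmetric])
    also have "{G'\<in>\<Omega>. G' \<in> switch_nbrs G \<and> (((1::nat,1::nat) \<in> G) \<noteq> ((1,1) \<in> G'))}
        = {G'\<in>switch_nbrs G. ((1::nat,1::nat)\<in>G) \<noteq> ((1,1)\<in>G')}"
      using switch_regular[of G n d] that unfolding \<Omega>_def by auto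
    also have "real (card \<dots>) \<le> x" unfolding x_def
      using of_nat_mono[OF nbr_bound[of G n d]] that dn2 unfolding \<Omega>_def by simp
    finally show ?thesis .
  qed
  have Sle: "S \<le> 2 * k * x"
  proof -
    have "(\<Sum>G\<in>\<Omega>. \<beta> G * X G) \<le> (\<Sum>G\<in>\<Omega>. \<beta> G * x)"
      by (intro sum_mono mult_left_mono) (auto simp: Xle \<beta>_def)
    also have "\<dots> = k * x" unfolding \<beta>_def k_def using sum_if_B[OF finO BO, of 1 0]
      by (simp add: sum_distrib_right[symmetric])
    finally show ?thesis unfolding S2 by simp
  qed
  have Spos: "S > 0"
  proof -
    have "1 = ind G0 G1" unfolding ind_def using G1s G0in G1out by simp
    also have "\<dots> \<le> (\<Sum>G'\<in>\<Omega>. ind G0 G')" using finO G1 ind_nn by (intro member_le_sum) auto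
    also have "\<dots> \<le> S" unfolding S_def using finO G0 ind_nn
      by (intro member_le_sum[where f="\<lambda>G. \<Sum>G'\<in>\<Omega>. ind G G'"]) (auto intro: sum_nonneg)
    finally show ?thesis by simp
  qed
  have ln2: "2/3 \<le> ln (2::real)" "ln (2::real) \<le> 25/36" by (rule ln2_ge_two_thirds, rule ln2_le_25_over_36)
  have Lpos: "L > 0" unfolding L_def using Kpos Npos ln2 by simp
  have Dpos: "Dir_u n d f > 0" unfolding Dir using Lpos Spos by simp
  have Dle: "Dir_u n d f \<le> L / 2 * (2 * k * x)" unfolding Dir using Sle Lpos by simp
  have ratio: "1/40 * x \<le> Ent_u n d f / Dir_u n d f"
  proof -
    have "(r/12) / (L / 2 * (2 * k * x)) \<le> Ent_u n d f / Dir_u n d f"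
      using Entge Dle Dpos r0 by (intro frac_le) auto
    moreover have "(r/12) / (L / 2 * (2 * k * x)) = (x - 1) / (24 * ln 2)"
      unfolding L_def r_def N_def using Kpos kpos x8 ln2 by (simp add: field_simps)
    moreover have "1/40 * x \<le> (x - 1) / (24 * ln 2)"
    proof -
      have "x * ln 2 \<le> x * (25/36)" using ln2 x8 by (intro mult_left_mono) auto
      moreover have "x * (ln 2 * 24) = 24 * (x * ln 2)" by simp
      ultimately have "40 + x * (ln 2 * 24) \<le> x * 40" using x8 by linarith
      then show ?thesis using ln2 x8 by (simp add: field_simps)
    qed
    ultimately show ?thesis by linarith
  qed
  have fin: "f \<in> {f. (\<forall>G\<in>OmegaB n d. f G > 0) \<and> (\<exists>G\<in>OmegaB n d. \<exists>G'\<in>OmegaB n d. f G \<noteq> f G')}"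
    using Gb Gn BO unfolding f_def \<Omega>_def[symmetric] by force
  have "ereal (1/40 * real n * real d) \<le> ereal (Ent_u n d f / Dir_u n d f)"
    using ratio unfolding x_def by simp
  also have "\<dots> \<le> mlsi_const n d" unfolding mlsi_const_def using fin by (rule SUP_upper)
  finally show "ereal (1/40 * real n * real d) \<le> mlsi_const n d" .
qed (simp)


end
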